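(* For every connected conjunctive query $q$, $\mathbf E[|q(I)|]=n^{1+\chi(q)}$, where the expectation is over a uniformly chosen matching database $I$ over $[n]$.
   Context: A (full, self-join-free) conjunctive query $q(x_1,\ldots,x_k)=S_1(\bar x_1),\ldots,S_\ell(\bar x_\ell)$ has $k$ distinct variables and $\ell$ atoms over distinct relation symbols, $S_j$ of arity $a_j$; $q(I)$ is the set of $\mathbf a\in[n]^k$ such that the projection of $\mathbf a$ onto each atom lies in $S_j$. It is connected if its hypergraph (variables as vertices, hyperedge $\mathrm{vars}(S_j)$ per atom) is connected. $\chi(q)=k+\ell-\sum_ja_j-c$, with $c$ the number of connected components. A matching database over $[n]$: each $S_j$ has exactly $n$ tuples and each of its columns contains each value of $[n]$ exactly once; uniformly chosen means each $S_j$ independently uniform among these. *)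

theory Defs
  imports "HOL-Probability.Probability"
begin

text \<open>A full self-join-free conjunctive query with k variables (named 0..<k) is given by
  a list of atoms; atom j is the list of variables of the relation symbol S_j,
  so its arity is the length of the list (variables may repeat).
  The domain [n] is represented as {0..<n}.\<close>

definition wf_cq :: "nat \<Rightarrow> nat list list \<Rightarrow> bool" where
  "wf_cq k atoms \<longleftrightarrow> (\<forall>xs \<in> set atoms. xs \<noteq> [] \<and> set xs \<subseteq> {..<k})"

definition cq_adj :: "nat list list \<Rightarrow> (nat \<times> nat) set" where
  "cq_adj atoms = {(u, v). \<exists>xs \<in> set atoms. u \<in> set xs \<and> v \<in> set xs}"

definition cq_conn_rel :: "nat \<Rightarrow> nat list list \<Rightarrow> (nat \<times> nat) set" where
  "cq_conn_rel k atoms = (cq_adj atoms)\<^sup>* \<inter> ({..<k} \<times> {..<k})"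

definition num_components :: "nat \<Rightarrow> nat list list \<Rightarrow> nat" where
  "num_components k atoms = card ({..<k} // cq_conn_rel k atoms)"

definition connected_cq :: "nat \<Rightarrow> nat list list \<Rightarrow> bool" where
  "connected_cq k atoms \<longleftrightarrow> k \<ge> 1 \<and> (\<forall>u<k. \<forall>v<k. (u, v) \<in> (cq_adj atoms)\<^sup>*)"

definition chi :: "nat \<Rightarrow> nat list list \<Rightarrow> int" where
  "chi k atoms = int k + int (length atoms) - int (\<Sum>j<length atoms. length (atoms ! j))
                 - int (num_components k atoms)"

definition matching_rel :: "nat \<Rightarrow> nat \<Rightarrow> nat list set \<Rightarrow> bool" where
  "matching_rel n m R \<longleftrightarrow> R \<subseteq> {t. length t = m \<and> set t \<subseteq> {..<n}} \<and> card R = n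
     \<and> (\<forall>i<m. bij_betw (\<lambda>t. t ! i) R {..<n})"

definition matching_dbs :: "nat \<Rightarrow> nat list list \<Rightarrow> (nat \<Rightarrow> nat list set) set" where
  "matching_dbs n atoms = (\<Pi>\<^sub>E j\<in>{..<length atoms}. {R. matching_rel n (length (atoms ! j)) R})"

definition cq_answers :: "nat \<Rightarrow> nat \<Rightarrow> nat list list \<Rightarrow> (nat \<Rightarrow> nat list set) \<Rightarrow> nat list set" where
  "cq_answers n k atoms I = {a. length a = k \<and> set a \<subseteq> {..<n} \<and>
      (\<forall>j<length atoms. map (\<lambda>v. a ! v) (atoms ! j) \<in> I j)}"

end

theory Submission
  imports Defs
begin

definition sw1 :: "nat \<Rightarrow> nat \<Rightarrow> nat \<Rightarrow> nat" where
  "sw1 a b x = (if x = a then b else if x = b then a else x)"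

lemma sw1_inv[simp]: "sw1 a b (sw1 a b x) = x"
  by (auto simp: sw1_def)

lemma sw1_lt: "a < n \<Longrightarrow> b < n \<Longrightarrow> x < n \<Longrightarrow> sw1 a b x < n"
  by (auto simp: sw1_def)

lemma sw1_bij: "a < n \<Longrightarrow> b < n \<Longrightarrow> bij_betw (sw1 a b) {..<n} {..<n}"
  by (rule bij_betw_byWitness[where f'="sw1 a b"]) (auto simp: sw1_lt)

definition swl :: "nat list \<Rightarrow> nat list \<Rightarrow> nat list \<Rightarrow> nat list" where
  "swl t t' s = map (\<lambda>i. sw1 (t!i) (t'!i) (s!i)) [0..<length s]"

lemma swl_length[simp]: "length (swl t t' s) = length s"
  by (simp add: swl_def)

lemma swl_nth[simp]: "i < length s \<Longrightarrow> swl t t' s ! i = sw1 (t!i) (t'!i) (s!i)"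
  by (simp add: swl_def)

lemma swl_inv[simp]: "swl t t' (swl t t' s) = s"
  by (rule nth_equalityI) auto

lemma swl_t: "length t = length t' \<Longrightarrow> swl t t' t = t'"
  by (rule nth_equalityI) (auto simp: sw1_def)

lemma swl_t': "length t = length t' \<Longrightarrow> swl t t' t' = t"
  by (rule nth_equalityI) (auto simp: sw1_def)

definition TT :: "nat \<Rightarrow> nat \<Rightarrow> nat list set" where
  "TT n m = {t. length t = m \<and> set t \<subseteq> {..<n}}"

lemma TT_nth: "t \<in> TT n m \<Longrightarrow> i < m \<Longrightarrow> t ! i < n"
  by (auto simp: TT_def dest!: nth_mem[of i t])

lemma swl_TT:
  assumes "t \<in> TT n m" "t' \<in> TT n m" "s \<in> TT n m"
  shows "swl t t' s \<in> TT n m"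
proof -
  have "\<forall>x\<in>set (swl t t' s). x < n"
  proof
    fix x assume "x \<in> set (swl t t' s)"
    then obtain i where i: "i < m" "x = sw1 (t!i) (t'!i) (s!i)"
      using assms by (auto simp: in_set_conv_nth TT_def)
    show "x < n" unfolding i using assms i(1) by (intro sw1_lt TT_nth)
  qed
  then show ?thesis using assms by (auto simp: TT_def)
qed

lemma matching_swl:
  assumes "t \<in> TT n m" "t' \<in> TT n m" "matching_rel n m R"
  shows "matching_rel n m (swl t t' ` R)"
proof -
  have RT: "R \<subseteq> TT n m" using assms(3) by (auto simp: matching_rel_def TT_def)
  have inj: "inj_on (swl t t') R" by (metis inj_on_inverseI swl_inv)
  have sub: "swl t t' ` R \<subseteq> TT n m" using RT swl_TT[OF assms(1,2)] by auto
  have card: "card (swl t t' ` R) = n"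
    using card_image[OF inj] assms(3) by (simp add: matching_rel_def)
  have bij: "bij_betw (\<lambda>s. s ! i) (swl t t' ` R) {..<n}" if i: "i < m" for i
  proof -
    have ti: "t!i < n" "t'!i < n" using assms(1,2) i by (auto intro: TT_nth)
    have b1: "bij_betw (\<lambda>s. s ! i) R {..<n}" using assms(3) i by (simp add: matching_rel_def)
    have b2: "bij_betw (sw1 (t!i) (t'!i) \<circ> (\<lambda>s. s ! i)) R {..<n}"
      by (rule bij_betw_trans[OF b1 sw1_bij[OF ti]])
    have b3: "bij_betw (swl t t') (swl t t' ` R) R"
      by (rule bij_betw_byWitness[where f'="swl t t'"]) (auto simp: image_image)
    have b4: "bij_betw ((sw1 (t!i) (t'!i) \<circ> (\<lambda>s. s ! i)) \<circ> swl t t') (swl t t' ` R) {..<n}"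
      by (rule bij_betw_trans[OF b3 b2])
    show ?thesis
    proof (rule bij_betw_cong[THEN iffD1, OF _ b4])
      fix s assume "s \<in> swl t t' ` R"
      then obtain r where r: "r \<in> R" "s = swl t t' r" by auto
      have "length r = m" using RT r(1) by (auto simp: TT_def)
      then show "((sw1 (t!i) (t'!i) \<circ> (\<lambda>s. s ! i)) \<circ> swl t t') s = s ! i"
        using r i by simp
    qed
  qed
  show ?thesis using sub card bij by (auto simp: matching_rel_def TT_def)
qed

lemma count_sym:
  assumes "t \<in> TT n m" "t' \<in> TT n m"
  shows "card {R. matching_rel n m R \<and> t \<in> R} = card {R. matching_rel n m R \<and> t' \<in> R}"
proof -
  have len: "length t = length t'" using assms by (auto simp: TT_def)
  have RT: "R \<subseteq> TT n m" if "matching_rel n m R" for R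
    using that by (auto simp: matching_rel_def TT_def)
  show ?thesis
  proof (rule bij_betw_same_card[of "image (swl t t')"], rule bij_betw_byWitness[where f'="image (swl t t')"])
    show "\<forall>a\<in>{R. matching_rel n m R \<and> t \<in> R}. swl t t' ` swl t t' ` a = a"
      by (auto simp: image_image)
    show "\<forall>a\<in>{R. matching_rel n m R \<and> t' \<in> R}. swl t t' ` swl t t' ` a = a"
      by (auto simp: image_image)
    show "image (swl t t') ` {R. matching_rel n m R \<and> t \<in> R} \<subseteq> {R. matching_rel n m R \<and> t' \<in> R}"
      using matching_swl[OF assms] swl_t[OF len] by force
    show "image (swl t t') ` {R. matching_rel n m R \<and> t' \<in> R} \<subseteq> {R. matching_rel n m R \<and> t \<in> R}"
      using matching_swl[OF assms] swl_t'[OF len] by force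
  qed
qed

lemma finite_TT: "finite (TT n m)"
  unfolding TT_def using finite_lists_length_eq[of "{..<n}" m] by (simp add: conj_commute)

lemma card_TT: "card (TT n m) = n ^ m"
  unfolding TT_def using card_lists_length_eq[of "{..<n}" m] by (simp add: conj_commute)

lemma finite_M: "finite {R. matching_rel n m R}"
proof (rule finite_subset[of _ "Pow (TT n m)"])
  show "{R. matching_rel n m R} \<subseteq> Pow (TT n m)" by (auto simp: matching_rel_def TT_def)
qed (simp add: finite_TT)

lemma count_main:
  assumes "t \<in> TT n m"
  shows "real (card {R. matching_rel n m R \<and> t \<in> R}) * real n ^ m
         = real (card {R. matching_rel n m R}) * real n"
proof -
  let ?M = "{R. matching_rel n m R}"
  let ?c = "\<lambda>s. card {R. matching_rel n m R \<and> s \<in> R}"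
  have fM: "finite ?M" by (rule finite_M)
  have c_eq: "?c s = (\<Sum>R\<in>?M. if s \<in> R then 1 else 0)" for s
  proof -
    have "(\<Sum>R\<in>?M. if s \<in> R then 1 else (0::nat)) = card {R \<in> ?M. s \<in> R}"
      using fM by (simp add: sum.If_cases Int_def)
    then show ?thesis by simp
  qed
  have "(\<Sum>s\<in>TT n m. ?c s) = (\<Sum>R\<in>?M. \<Sum>s\<in>TT n m. if s \<in> R then 1 else 0)"
    unfolding c_eq by (rule sum.swap)
  also have "\<dots> = (\<Sum>R\<in>?M. n)"
  proof (rule sum.cong[OF refl])
    fix R assume "R \<in> ?M"
    then have "R \<subseteq> TT n m" "card R = n" by (auto simp: matching_rel_def TT_def)
    then have "card (TT n m \<inter> R) = n" by (simp add: Int_absorb1)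
    then show "(\<Sum>s\<in>TT n m. if s \<in> R then 1 else 0) = n"
      using finite_TT by (simp add: sum.If_cases)
  qed
  also have "\<dots> = card ?M * n" by simp
  finally have A: "(\<Sum>s\<in>TT n m. ?c s) = card ?M * n" .
  have "(\<Sum>s\<in>TT n m. ?c s) = (\<Sum>s\<in>TT n m. ?c t)"
    by (rule sum.cong[OF refl]) (use count_sym[OF _ assms] in auto)
  also have "\<dots> = n ^ m * ?c t" by (simp add: card_TT)
  finally have "n ^ m * ?c t = card ?M * n" using A by simp
  then have "real (n ^ m * ?c t) = real (card ?M * n)" by simp
  then show ?thesis by (simp add: mult.commute)
qed

lemma count_div:
  assumes "t \<in> TT n m" "n \<ge> 1" "m \<ge> 1"
  shows "real (card {R. matching_rel n m R \<and> t \<in> R})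
         = real (card {R. matching_rel n m R}) / real n ^ (m - 1)"
proof -
  have "real n ^ m = real n * real n ^ (m - 1)" using assms(3)
    by (metis Suc_diff_1 less_eq_Suc_le power_Suc One_nat_def)
  with count_main[OF assms(1)] assms(2) show ?thesis
    by (simp add: field_simps)
qed

lemma M_nonempty:
  assumes "m \<ge> 1"
  shows "{R. matching_rel n m R} \<noteq> {}"
proof -
  let ?R = "(\<lambda>i. replicate m i) ` {..<n}"
  have inj: "inj_on (\<lambda>i. replicate m i) {..<n}"
    using assms by (auto simp: inj_on_def)
  have "matching_rel n m ?R"
    unfolding matching_rel_def
  proof (intro conjI allI impI)
    show "?R \<subseteq> {t. length t = m \<and> set t \<subseteq> {..<n}}" by auto
    show "card ?R = n" using card_image[OF inj] by simp
    fix i assume "i < m"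
    then show "bij_betw (\<lambda>t. t ! i) ?R {..<n}"
      by (intro bij_betw_byWitness[where f'="\<lambda>i. replicate m i"]) auto
  qed
  then show ?thesis by blast
qed

lemma num_comp_1:
  assumes "connected_cq k atoms"
  shows "num_components k atoms = 1"
proof -
  have k: "k \<ge> 1" and c: "\<And>u v. u < k \<Longrightarrow> v < k \<Longrightarrow> (u, v) \<in> (cq_adj atoms)\<^sup>*"
    using assms by (auto simp: connected_cq_def)
  have cls: "cq_conn_rel k atoms `` {x} = {..<k}" if "x < k" for x
    using that c by (auto simp: cq_conn_rel_def)
  have "{..<k} // cq_conn_rel k atoms = {{..<k}}"
  proof -
    have "(\<Union>x\<in>{..<k}. {cq_conn_rel k atoms `` {x}}) = (\<Union>x\<in>{..<k}. {{..<k}})"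
      by (rule SUP_cong[OF refl]) (simp add: cls)
    also have "\<dots> = {{..<k}}"
    proof -
      have "0 \<in> {..<k}" using k by simp
      then show ?thesis by blast
    qed
    finally show ?thesis unfolding quotient_def .
  qed
  then show ?thesis by (simp add: num_components_def)
qed

theorem lemma2:
  fixes n k :: nat and atoms :: "nat list list"
  assumes "wf_cq k atoms" and "connected_cq k atoms" and "n \<ge> 1"
  shows "measure_pmf.expectation (pmf_of_set (matching_dbs n atoms))
           (\<lambda>I. real (card (cq_answers n k atoms I)))
         = real n powi (1 + chi k atoms)"
proof -
  define L where "L = length atoms"
  define m where "m j = length (atoms ! j)" for j
  define D where "D = matching_dbs n atoms"
  define A where "A = TT n k"
  define pr where "pr a j = map (\<lambda>v. a ! v) (atoms ! j)" for a :: "nat list" and j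
  define N where "N j = card {R. matching_rel n (m j) R}" for j
  define S where "S = (\<Sum>j<L. m j - 1)"
  have m1: "m j \<ge> 1" if "j < L" for j
    using assms(1) that unfolding wf_cq_def m_def L_def
    using nth_mem[of j atoms] by (simp add: Suc_le_eq)
  have D_def': "D = (\<Pi>\<^sub>E j\<in>{..<L}. {R. matching_rel n (m j) R})"
    by (simp add: D_def matching_dbs_def L_def m_def)
  have fD: "finite D" unfolding D_def' by (intro finite_PiE finite_M) auto
  have neD: "D \<noteq> {}" unfolding D_def' using M_nonempty m1 by (auto simp: PiE_eq_empty_iff)
  have fA: "finite A" by (simp add: A_def finite_TT)
  have prT: "pr a j \<in> TT n (m j)" if "a \<in> A" "j < L" for a j
  proof -
    have "set (atoms ! j) \<subseteq> {..<k}" using assms(1) that(2) by (auto simp: wf_cq_def L_def)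
    then show ?thesis using that(1) unfolding TT_def A_def pr_def m_def
      by (auto intro!: TT_nth[unfolded TT_def, simplified] simp: subset_iff)
  qed
  have ans: "cq_answers n k atoms I = {a \<in> A. \<forall>j<L. pr a j \<in> I j}" for I
    by (auto simp: cq_answers_def A_def TT_def pr_def L_def)
  have "(\<Sum>I\<in>D. card (cq_answers n k atoms I))
        = (\<Sum>I\<in>D. \<Sum>a\<in>A. if \<forall>j<L. pr a j \<in> I j then 1 else 0)"
    unfolding ans using fA by (simp add: sum.If_cases Int_def)
  also have "\<dots> = (\<Sum>a\<in>A. \<Sum>I\<in>D. if \<forall>j<L. pr a j \<in> I j then 1 else 0)"
    by (rule sum.swap)
  also have "\<dots> = (\<Sum>a\<in>A. card {I \<in> D. \<forall>j<L. pr a j \<in> I j})"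
    using fD by (simp add: sum.If_cases Int_def)
  also have "\<dots> = (\<Sum>a\<in>A. \<Prod>j<L. card {R. matching_rel n (m j) R \<and> pr a j \<in> R})"
  proof (rule sum.cong[OF refl])
    fix a assume "a \<in> A"
    have "{I \<in> D. \<forall>j<L. pr a j \<in> I j} = (\<Pi>\<^sub>E j\<in>{..<L}. {R. matching_rel n (m j) R \<and> pr a j \<in> R})"
      unfolding D_def' by (auto simp: PiE_def Pi_def)
    then show "card {I \<in> D. \<forall>j<L. pr a j \<in> I j} = (\<Prod>j<L. card {R. matching_rel n (m j) R \<and> pr a j \<in> R})"
      by (simp add: card_PiE)
  qed
  finally have sumeq: "(\<Sum>I\<in>D. card (cq_answers n k atoms I))
     = (\<Sum>a\<in>A. \<Prod>j<L. card {R. matching_rel n (m j) R \<and> pr a j \<in> R})" .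
  have cardD: "card D = (\<Prod>j<L. N j)" unfolding D_def' N_def by (simp add: card_PiE)
  have "card D \<noteq> 0" using neD fD by simp
  then have Npos: "real (\<Prod>j<L. N j) \<noteq> 0" using cardD by simp
  have inner: "real (\<Prod>j<L. card {R. matching_rel n (m j) R \<and> pr a j \<in> R})
        = real (\<Prod>j<L. N j) / real n ^ S" if "a \<in> A" for a
  proof -
    have "real (\<Prod>j<L. card {R. matching_rel n (m j) R \<and> pr a j \<in> R})
          = (\<Prod>j<L. real (N j) / real n ^ (m j - 1))"
      unfolding of_nat_prod N_def
      by (rule prod.cong[OF refl]) (use count_div prT[OF that] assms(3) m1 in auto)
    also have "\<dots> = (\<Prod>j<L. real (N j)) / (\<Prod>j<L. real n ^ (m j - 1))"
      by (rule prod_dividef)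
    also have "(\<Prod>j<L. real n ^ (m j - 1)) = real n ^ S"
      unfolding S_def by (simp add: power_sum)
    finally show ?thesis by simp
  qed
  have "measure_pmf.expectation (pmf_of_set D) (\<lambda>I. real (card (cq_answers n k atoms I)))
        = (\<Sum>I\<in>D. real (card (cq_answers n k atoms I))) / real (card D)"
    using integral_pmf_of_set[OF neD fD] by simp
  also have "\<dots> = (\<Sum>a\<in>A. real (\<Prod>j<L. N j) / real n ^ S) / real (\<Prod>j<L. N j)"
  proof -
    have "(\<Sum>I\<in>D. real (card (cq_answers n k atoms I))) = real (\<Sum>I\<in>D. card (cq_answers n k atoms I))"
      by simp
    also have "\<dots> = (\<Sum>a\<in>A. real (\<Prod>j<L. card {R. matching_rel n (m j) R \<and> pr a j \<in> R}))"
      by (simp only: sumeq of_nat_sum)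
    also have "\<dots> = (\<Sum>a\<in>A. real (\<Prod>j<L. N j) / real n ^ S)"
      by (rule sum.cong[OF refl]) (rule inner)
    finally show ?thesis by (simp only: cardD)
  qed
  also have "\<dots> = real n ^ k / real n ^ S"
    using Npos by (simp add: A_def card_TT)
  also have "\<dots> = real n powi (int k - int S)"
    using assms(3) by (simp add: power_int_diff)
  also have "int k - int S = 1 + chi k atoms"
  proof -
    have "(\<Sum>j<L. length (atoms ! j)) = (\<Sum>j<L. (m j - 1) + 1)"
      by (rule sum.cong[OF refl]) (use m1 in \<open>fastforce simp: m_def\<close>)
    also have "\<dots> = S + L" unfolding S_def sum.distrib by simp
    finally show ?thesis
      unfolding chi_def num_comp_1[OF assms(2)] L_def[symmetric] by simp
  qed
  finally show ?thesis by (simp add: D_def)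
qed

end
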